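(* Let $\mathcal M''=\bigcup_{K=1}^{\min(M,N)}\mathcal F_K^{\mathrm{an}}\times \mathcal Q_K^{\mathrm{in}}$. Then $\mathcal M''$ is identifiable: for all $(F^1,Q^1),(F^2,Q^2)\in\mathcal M''$, $F^1Q^1=F^2Q^2$ implies $(F^1,Q^1)\sim(F^2,Q^2)$.
   Context: Fix positive integers $M$ and $N$. For a positive integer $K$, $\mathcal F_K$ is the set of real $M\times K$ matrices with all entries in $[0,1]$, and $\mathcal Q_K$ is the set of real $K\times N$ matrices with entries in $[0,1]$ each of whose columns sums to $1$. $\mathcal F_K^{\mathrm{an}}$ is the set of $F\in\mathcal F_K$ such that for every $k\in\{1,\dots,K\}$ there is a row $s$ with $F_{sk}>0$ and $F_{s\ell}=0$ for all $\ell\neq k$. $\mathcal Q_K^{\mathrm{in}}$ is the set of $Q\in\mathcal Q_K$ whose rows are linearly independent. $(F^1,Q^1)\sim(F^2,Q^2)$ means $F^1,F^2$ have the same number $K$ of columns and there is a permutation $\pi$ of $\{1,\dots,K\}$ with $F^2_{sk}=F^1_{s\pi(k)}$ and $Q^2_{ki}=Q^1_{\pi(k)i}$ for all $s,k,i$. A set $\mathcal M\subseteq\bigcup_{K\ge1}\mathcal F_K\times\mathcal Q_K$ is identifiable if for all $(F^1,Q^1),(F^2,Q^2)\in\mathcal M$, $F^1Q^1=F^2Q^2$ implies $(F^1,Q^1)\sim(F^2,Q^2)$. *)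

theory Defs
  imports "Jordan_Normal_Form.Matrix" "HOL-Combinatorics.Permutations"
begin

definition F_set :: "nat \<Rightarrow> nat \<Rightarrow> real mat set" where
  "F_set M K = {F. F \<in> carrier_mat M K \<and>
      (\<forall>s<M. \<forall>k<K. 0 \<le> F $$ (s,k) \<and> F $$ (s,k) \<le> 1)}"

definition Q_set :: "nat \<Rightarrow> nat \<Rightarrow> real mat set" where
  "Q_set K N = {Q. Q \<in> carrier_mat K N \<and>
      (\<forall>k<K. \<forall>i<N. 0 \<le> Q $$ (k,i) \<and> Q $$ (k,i) \<le> 1) \<and>
      (\<forall>i<N. (\<Sum>k<K. Q $$ (k,i)) = 1)}"

definition F_an_set :: "nat \<Rightarrow> nat \<Rightarrow> real mat set" where
  "F_an_set M K = {F. F \<in> F_set M K \<and>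
      (\<forall>k<K. \<exists>s<M. F $$ (s,k) > 0 \<and> (\<forall>l<K. l \<noteq> k \<longrightarrow> F $$ (s,l) = 0))}"

definition rows_lin_indep :: "nat \<Rightarrow> nat \<Rightarrow> real mat \<Rightarrow> bool" where
  "rows_lin_indep K N Q \<longleftrightarrow>
     (\<forall>c :: nat \<Rightarrow> real. (\<forall>i<N. (\<Sum>k<K. c k * Q $$ (k,i)) = 0) \<longrightarrow> (\<forall>k<K. c k = 0))"

definition Q_in_set :: "nat \<Rightarrow> nat \<Rightarrow> real mat set" where
  "Q_in_set K N = {Q. Q \<in> Q_set K N \<and> rows_lin_indep K N Q}"

definition M2 :: "nat \<Rightarrow> nat \<Rightarrow> (real mat \<times> real mat) set" where
  "M2 M N = (\<Union>K\<in>{1..min M N}. F_an_set M K \<times> Q_in_set K N)"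

definition perm_equiv :: "real mat \<times> real mat \<Rightarrow> real mat \<times> real mat \<Rightarrow> bool" where
  "perm_equiv p1 p2 \<longleftrightarrow> (case p1 of (F1, Q1) \<Rightarrow> case p2 of (F2, Q2) \<Rightarrow>
     dim_col F1 = dim_col F2 \<and> dim_row F1 = dim_row F2 \<and>
     dim_row Q1 = dim_row Q2 \<and> dim_col Q1 = dim_col Q2 \<and>
     (\<exists>\<pi>. \<pi> permutes {..<dim_col F1} \<and>
        (\<forall>s<dim_row F1. \<forall>k<dim_col F1. F2 $$ (s,k) = F1 $$ (s, \<pi> k)) \<and>
        (\<forall>k<dim_row Q1. \<forall>i<dim_col Q1. Q2 $$ (k,i) = Q1 $$ (\<pi> k, i))))"

definition identifiable :: "(real mat \<times> real mat) set \<Rightarrow> bool" where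
  "identifiable S \<longleftrightarrow>
     (\<forall>F1 Q1 F2 Q2. (F1, Q1) \<in> S \<longrightarrow> (F2, Q2) \<in> S \<longrightarrow>
        F1 * Q1 = F2 * Q2 \<longrightarrow> perm_equiv (F1, Q1) (F2, Q2))"

end

theory Submission
  imports Defs
begin

lemma propA:
  assumes F1: "F1 \<in> F_an_set M K1" and F2: "F2 \<in> F_an_set M K2"
    and Q2: "Q2 \<in> Q_in_set K2 N"
    and P: "\<And>s i. s<M \<Longrightarrow> i<N \<Longrightarrow>
       (\<Sum>j<K1. F1$$(s,j) * Q1$$(j,i)) = (\<Sum>l<K2. F2$$(s,l) * Q2$$(l,i))"
    and k: "k < K2"
  shows "\<exists>j<K1. \<exists>c. \<forall>i<N. Q1$$(j,i) = c * Q2$$(k,i)"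
proof -
  have f1nn: "\<And>s j. s<M \<Longrightarrow> j<K1 \<Longrightarrow> 0 \<le> F1$$(s,j)"
    using F1 by (auto simp: F_an_set_def F_set_def)
  have f2nn: "\<And>s j. s<M \<Longrightarrow> j<K2 \<Longrightarrow> 0 \<le> F2$$(s,j)"
    using F2 by (auto simp: F_an_set_def F_set_def)
  have li2: "rows_lin_indep K2 N Q2" using Q2 by (simp add: Q_in_set_def)
  obtain s where s: "s<M" "F2$$(s,k) > 0" "\<forall>l<K2. l\<noteq>k \<longrightarrow> F2$$(s,l) = 0"
    using F2 k by (auto simp: F_an_set_def)
  define a where "a = F2$$(s,k)"
  have Ps: "(\<Sum>l<K2. F2$$(s,l) * Q2$$(l,i)) = a * Q2$$(k,i)" for i
  proof -
    have "(\<Sum>l<K2. F2$$(s,l) * Q2$$(l,i)) = (\<Sum>l<K2. if l = k then a * Q2$$(k,i) else 0)"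
      by (rule sum.cong) (auto simp: a_def s(3))
    also have "\<dots> = a * Q2$$(k,i)" using k by simp
    finally show ?thesis .
  qed
  have "\<forall>j. \<exists>t. j<K1 \<longrightarrow> t<M \<and> F1$$(t,j) > 0 \<and> (\<forall>l<K1. l\<noteq>j \<longrightarrow> F1$$(t,l) = 0)"
    using F1 by (auto simp: F_an_set_def)
  then obtain t where t: "\<And>j. j<K1 \<Longrightarrow> t j<M \<and> F1$$(t j,j) > 0 \<and> (\<forall>l<K1. l\<noteq>j \<longrightarrow> F1$$(t j,l) = 0)"
    by metis
  define b where "b j = F1$$(t j, j)" for j
  have bpos: "j<K1 \<Longrightarrow> b j > 0" for j using t b_def by auto
  have Q1row: "Q1$$(j,i) = (\<Sum>l<K2. F2$$(t j,l) * Q2$$(l,i)) / b j" if j: "j<K1" and i: "i<N" for j i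
  proof -
    have "(\<Sum>l<K1. F1$$(t j,l) * Q1$$(l,i)) = (\<Sum>l<K1. if l = j then b j * Q1$$(j,i) else 0)"
      by (rule sum.cong) (use t[OF j] in \<open>auto simp: b_def\<close>)
    also have "\<dots> = b j * Q1$$(j,i)" using j by simp
    finally have "b j * Q1$$(j,i) = (\<Sum>l<K2. F2$$(t j,l) * Q2$$(l,i))"
      using P[of "t j" i] t[OF j] i by simp
    then show ?thesis using bpos[OF j] by (simp add: field_simps)
  qed
  define g where "g j l = F1$$(s,j) * F2$$(t j,l) / b j" for j l
  have gnn: "j<K1 \<Longrightarrow> l<K2 \<Longrightarrow> 0 \<le> g j l" for j l
    unfolding g_def using f1nn[OF s(1)] f2nn t bpos
    by (metis divide_nonneg_pos mult_nonneg_nonneg)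
  define d where "d l = (\<Sum>j<K1. g j l) - (if l = k then a else 0)" for l
  have "\<forall>i<N. (\<Sum>l<K2. d l * Q2$$(l,i)) = 0"
  proof (intro allI impI)
    fix i assume i: "i<N"
    have e0: "(\<Sum>l<K2. (if l = k then a else 0) * Q2$$(l,i)) = a * Q2$$(k,i)"
    proof -
      have "(\<Sum>l<K2. (if l = k then a else 0) * Q2$$(l,i)) = (\<Sum>l<K2. if l = k then a * Q2$$(k,i) else 0)"
        by (rule sum.cong) auto
      then show ?thesis using k by simp
    qed
    have e1: "(\<Sum>l<K2. d l * Q2$$(l,i)) = (\<Sum>l<K2. (\<Sum>j<K1. g j l) * Q2$$(l,i)) - a * Q2$$(k,i)"
      unfolding d_def left_diff_distrib sum_subtractf e0 ..
    have e2: "(\<Sum>l<K2. (\<Sum>j<K1. g j l) * Q2$$(l,i)) = (\<Sum>j<K1. F1$$(s,j) * ((\<Sum>l<K2. F2$$(t j,l) * Q2$$(l,i)) / b j))"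
      unfolding g_def sum_distrib_left sum_distrib_right sum_divide_distrib
      by (subst sum.swap) (simp add: mult_ac)
    have e3: "\<dots> = (\<Sum>j<K1. F1$$(s,j) * Q1$$(j,i))"
      by (rule sum.cong) (auto simp: Q1row i)
    show "(\<Sum>l<K2. d l * Q2$$(l,i)) = 0"
      using e1 e2 e3 P[OF s(1) i] Ps[of i] by simp
  qed
  then have d0: "\<And>l. l<K2 \<Longrightarrow> d l = 0" using li2 unfolding rows_lin_indep_def by blast
  have "(\<Sum>j<K1. g j k) = a" using d0[OF k] by (simp add: d_def)
  then have "(\<Sum>j<K1. g j k) \<noteq> 0" using s(2) a_def by simp
  then obtain j where j: "j<K1" "g j k \<noteq> 0" by (meson lessThan_iff sum.neutral)
  then have f1pos: "F1$$(s,j) > 0" using f1nn[OF s(1) j(1)] unfolding g_def by force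
  have zero: "F2$$(t j,l) = 0" if l: "l<K2" "l\<noteq>k" for l
  proof -
    have "(\<Sum>j<K1. g j l) = 0" using d0[OF l(1)] l(2) by (simp add: d_def)
    moreover have "\<forall>x\<in>{..<K1}. 0 \<le> g x l" using gnn l(1) by simp
    ultimately have "\<forall>x\<in>{..<K1}. g x l = 0" using sum_nonneg_eq_0_iff[of "{..<K1}" "\<lambda>x. g x l"] by simp
    then have "g j l = 0" using j(1) by simp
    then show ?thesis using f1pos bpos[OF j(1)] by (simp add: g_def)
  qed
  have "\<forall>i<N. Q1$$(j,i) = (F2$$(t j,k) / b j) * Q2$$(k,i)"
  proof (intro allI impI)
    fix i assume i: "i<N"
    have "(\<Sum>l<K2. F2$$(t j,l) * Q2$$(l,i)) = (\<Sum>l<K2. if l = k then F2$$(t j,k) * Q2$$(k,i) else 0)"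
      by (rule sum.cong) (auto simp: zero)
    also have "\<dots> = F2$$(t j,k) * Q2$$(k,i)" using k by simp
    finally show "Q1$$(j,i) = (F2$$(t j,k) / b j) * Q2$$(k,i)" using Q1row[OF j(1) i] by simp
  qed
  then show ?thesis using j(1) by blast
qed


lemma li_apply:
  assumes "rows_lin_indep K N Q" "\<forall>i<N. (\<Sum>k<K. c k * Q$$(k,i)) = 0" "k<K"
  shows "c k = 0"
  using assms unfolding rows_lin_indep_def by blast

lemma injB:
  assumes li1: "rows_lin_indep K1 N Q1" and li2: "rows_lin_indep K2 N Q2"
    and sig: "\<And>k. k<K2 \<Longrightarrow> \<sigma> k < K1 \<and> (\<forall>i<N. Q1$$(\<sigma> k,i) = c k * Q2$$(k,i))"
  shows "inj_on \<sigma> {..<K2}"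
proof (rule inj_onI, rule ccontr)
  fix k k' assume k: "k \<in> {..<K2}" and k': "k' \<in> {..<K2}" and eq: "\<sigma> k = \<sigma> k'" and ne: "k \<noteq> k'"
  have ck: "c k \<noteq> 0"
  proof
    assume c0: "c k = 0"
    have "\<forall>i<N. (\<Sum>j<K1. (if j = \<sigma> k then 1 else 0) * Q1$$(j,i)) = 0"
    proof (intro allI impI)
      fix i assume i: "i<N"
      have "(\<Sum>j<K1. (if j = \<sigma> k then 1 else 0) * Q1$$(j,i)) = (\<Sum>j<K1. if j = \<sigma> k then Q1$$(\<sigma> k,i) else 0)"
        by (rule sum.cong) auto
      also have "\<dots> = Q1$$(\<sigma> k,i)" using sig k by simp
      also have "\<dots> = 0" using sig k i c0 by simp
      finally show "(\<Sum>j<K1. (if j = \<sigma> k then 1 else 0) * Q1$$(j,i)) = 0" .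
    qed
    from li_apply[OF li1 this, of "\<sigma> k"] show False using sig k by simp
  qed
  define e where "e l = (if l = k then c k else 0) - (if l = k' then c k' else 0)" for l
  have "\<forall>i<N. (\<Sum>l<K2. e l * Q2$$(l,i)) = 0"
  proof (intro allI impI)
    fix i assume i: "i<N"
    have "(\<Sum>l<K2. e l * Q2$$(l,i)) = (\<Sum>l<K2. (if l = k then c k * Q2$$(k,i) else 0) - (if l = k' then c k' * Q2$$(k',i) else 0))"
      by (rule sum.cong) (auto simp: e_def)
    also have "\<dots> = c k * Q2$$(k,i) - c k' * Q2$$(k',i)" using k k' by (simp add: sum_subtractf)
    also have "\<dots> = 0" using sig[of k] sig[of k'] k k' i eq by force
    finally show "(\<Sum>l<K2. e l * Q2$$(l,i)) = 0" .
  qed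
  from li_apply[OF li2 this] k have "e k = 0" by simp
  then show False using ck ne by (simp add: e_def)
qed

lemma mult_entry:
  assumes "F \<in> carrier_mat M K" "Q \<in> carrier_mat K N" "s<M" "i<N"
  shows "(F*Q)$$(s,i) = (\<Sum>j<K. F$$(s,j)*Q$$(j,i))"
  using assms by (simp add: index_mult_mat scalar_prod_def lessThan_atLeast0)

lemma sig_exists:
  assumes F1: "F1 \<in> F_an_set M K1" and F2: "F2 \<in> F_an_set M K2"
    and Q2: "Q2 \<in> Q_in_set K2 N"
    and P: "\<And>s i. s<M \<Longrightarrow> i<N \<Longrightarrow>
       (\<Sum>j<K1. F1$$(s,j) * Q1$$(j,i)) = (\<Sum>l<K2. F2$$(s,l) * Q2$$(l,i))"
  shows "\<exists>\<sigma> c. \<forall>k<K2. \<sigma> k < K1 \<and> (\<forall>i<N. Q1$$(\<sigma> k,i) = c k * Q2$$(k,i))"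
proof -
  have "\<forall>k. \<exists>j c. k<K2 \<longrightarrow> j < K1 \<and> (\<forall>i<N. Q1$$(j,i) = c * Q2$$(k,i))"
    using propA[OF F1 F2 Q2 P] by blast
  then show ?thesis by metis
qed

theorem mainTheorem3:
  fixes M N :: nat
  assumes "0 < M" and "0 < N"
  shows "identifiable (M2 M N)"
  unfolding identifiable_def
proof (intro allI impI)
  fix F1 Q1 F2 Q2 assume m1: "(F1, Q1) \<in> M2 M N" and m2: "(F2, Q2) \<in> M2 M N" and eq: "F1 * Q1 = F2 * Q2"
  obtain K1 where F1: "F1 \<in> F_an_set M K1" and Q1: "Q1 \<in> Q_in_set K1 N" using m1 by (auto simp: M2_def)
  obtain K2 where F2: "F2 \<in> F_an_set M K2" and Q2: "Q2 \<in> Q_in_set K2 N" using m2 by (auto simp: M2_def)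
  have cF1: "F1 \<in> carrier_mat M K1" using F1 by (simp add: F_an_set_def F_set_def)
  have cF2: "F2 \<in> carrier_mat M K2" using F2 by (simp add: F_an_set_def F_set_def)
  have cQ1: "Q1 \<in> carrier_mat K1 N" using Q1 by (simp add: Q_in_set_def Q_set_def)
  have cQ2: "Q2 \<in> carrier_mat K2 N" using Q2 by (simp add: Q_in_set_def Q_set_def)
  have li1: "rows_lin_indep K1 N Q1" using Q1 by (simp add: Q_in_set_def)
  have li2: "rows_lin_indep K2 N Q2" using Q2 by (simp add: Q_in_set_def)
  have cs1: "\<And>i. i<N \<Longrightarrow> (\<Sum>k<K1. Q1 $$ (k,i)) = 1" using Q1 by (simp add: Q_in_set_def Q_set_def)
  have cs2: "\<And>i. i<N \<Longrightarrow> (\<Sum>k<K2. Q2 $$ (k,i)) = 1" using Q2 by (simp add: Q_in_set_def Q_set_def)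
  have P: "\<And>s i. s<M \<Longrightarrow> i<N \<Longrightarrow>
       (\<Sum>j<K1. F1$$(s,j) * Q1$$(j,i)) = (\<Sum>l<K2. F2$$(s,l) * Q2$$(l,i))"
    using eq mult_entry[OF cF1 cQ1] mult_entry[OF cF2 cQ2] by simp
  obtain \<sigma> c where sig: "\<forall>k<K2. \<sigma> k < K1 \<and> (\<forall>i<N. Q1$$(\<sigma> k,i) = c k * Q2$$(k,i))"
    using sig_exists[OF F1 F2 Q2 P] by blast
  obtain \<tau> c' where tau: "\<forall>k<K1. \<tau> k < K2 \<and> (\<forall>i<N. Q2$$(\<tau> k,i) = c' k * Q1$$(k,i))"
  proof -
    have P': "\<And>s i. s<M \<Longrightarrow> i<N \<Longrightarrow>
       (\<Sum>l<K2. F2$$(s,l) * Q2$$(l,i)) = (\<Sum>j<K1. F1$$(s,j) * Q1$$(j,i))"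
      by (rule P[symmetric])
    show ?thesis using sig_exists[OF F2 F1 Q1 P'] that by blast
  qed
  have inj1: "inj_on \<sigma> {..<K2}" by (rule injB[OF li1 li2]) (use sig in blast)
  have inj2: "inj_on \<tau> {..<K1}" by (rule injB[OF li2 li1]) (use tau in blast)
  have "K2 \<le> K1" using card_inj_on_le[OF inj1, of "{..<K1}"] sig by auto
  moreover have "K1 \<le> K2" using card_inj_on_le[OF inj2, of "{..<K2}"] tau by auto
  ultimately have KK: "K1 = K2" by simp
  have img: "\<sigma> ` {..<K2} = {..<K2}"
    by (rule endo_inj_surj) (use sig KK inj1 in auto)
  have bij: "bij_betw \<sigma> {..<K2} {..<K2}" using inj1 img by (simp add: bij_betw_def)
  define \<pi> where "\<pi> k = (if k < K2 then \<sigma> k else k)" for k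
  have bijp: "bij_betw \<pi> {..<K2} {..<K2}"
    using bij by (rule bij_betw_cong[THEN iffD1, rotated]) (simp add: \<pi>_def)
  have perm: "\<pi> permutes {..<K2}"
    by (rule bij_imp_permutes[OF bijp]) (simp add: \<pi>_def)
  have c1: "c k = 1" if k: "k<K2" for k
  proof -
    have "\<forall>i<N. (\<Sum>l<K2. (c l - 1) * Q2$$(l,i)) = 0"
    proof (intro allI impI)
      fix i assume i: "i<N"
      have "(\<Sum>l<K2. (c l - 1) * Q2$$(l,i)) = (\<Sum>l<K2. Q1$$(\<sigma> l,i)) - (\<Sum>l<K2. Q2$$(l,i))"
        unfolding sum_subtractf[symmetric] by (rule sum.cong) (use sig i in \<open>auto simp: algebra_simps\<close>)
      also have "(\<Sum>l<K2. Q1$$(\<sigma> l,i)) = (\<Sum>l<K2. Q1$$(l,i))"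
        using sum.reindex_bij_betw[OF bij, of "\<lambda>l. Q1$$(l,i)"] by simp
      finally show "(\<Sum>l<K2. (c l - 1) * Q2$$(l,i)) = 0" using cs1[OF i] cs2[OF i] KK by simp
    qed
    from li_apply[OF li2 this k] have "c k - 1 = 0" by simp
    then show ?thesis by simp
  qed
  have Qeq: "Q2$$(k,i) = Q1$$(\<pi> k,i)" if "k<K2" "i<N" for k i
    using sig c1 that by (simp add: \<pi>_def)
  have Feq: "F2$$(s,k) = F1$$(s,\<pi> k)" if s: "s<M" and k: "k<K2" for s k
  proof -
    have "\<forall>i<N. (\<Sum>l<K2. (F2$$(s,l) - F1$$(s,\<sigma> l)) * Q2$$(l,i)) = 0"
    proof (intro allI impI)
      fix i assume i: "i<N"
      have "(\<Sum>l<K2. (F2$$(s,l) - F1$$(s,\<sigma> l)) * Q2$$(l,i)) =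
          (\<Sum>l<K2. F2$$(s,l) * Q2$$(l,i)) - (\<Sum>l<K2. F1$$(s,\<sigma> l) * Q1$$(\<sigma> l,i))"
        unfolding sum_subtractf[symmetric] by (rule sum.cong) (use sig c1 i in \<open>auto simp: algebra_simps\<close>)
      also have "(\<Sum>l<K2. F1$$(s,\<sigma> l) * Q1$$(\<sigma> l,i)) = (\<Sum>l<K2. F1$$(s,l) * Q1$$(l,i))"
        using sum.reindex_bij_betw[OF bij, of "\<lambda>l. F1$$(s,l) * Q1$$(l,i)"] by simp
      finally show "(\<Sum>l<K2. (F2$$(s,l) - F1$$(s,\<sigma> l)) * Q2$$(l,i)) = 0" using P[OF s i] KK by simp
    qed
    from li_apply[OF li2 this k] have "F2$$(s,k) - F1$$(s,\<sigma> k) = 0" by simp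
    then show ?thesis using k by (simp add: \<pi>_def)
  qed
  show "perm_equiv (F1, Q1) (F2, Q2)"
    unfolding perm_equiv_def prod.case
  proof (intro conjI)
    show "\<exists>\<pi>. \<pi> permutes {..<dim_col F1} \<and>
        (\<forall>s<dim_row F1. \<forall>k<dim_col F1. F2 $$ (s,k) = F1 $$ (s, \<pi> k)) \<and>
        (\<forall>k<dim_row Q1. \<forall>i<dim_col Q1. Q2 $$ (k,i) = Q1 $$ (\<pi> k, i))"
      using cF1 cQ1 KK perm Qeq Feq by (intro exI[of _ \<pi>]) simp
  qed (use cF1 cF2 cQ1 cQ2 KK in simp_all)
qed

end
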